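(* Let $d$ be a prime number and $p$ an odd prime, and let $T_d$ be the $d$-th Chebyshev polynomial of the first kind, viewed as a self-map of $\mathbb{A}^1(\mathbb{F}_p)=\mathbb{F}_p$. If $d=2$, or if $2d=p+1$, then $T_d$ has exactly $\frac{p-1}{2}$ leaves, i.e. exactly $\frac{p-1}{2}$ points $x\in\mathbb{F}_p$ have no preimage under $T_d$.
   Context: The $d$-th Chebyshev polynomial of the first kind $T_d\in\mathbb{Z}[z]$ is the monic degree-$d$ polynomial with $T_d(z+z^{-1})=z^d+z^{-d}$, reduced modulo $p$. A leaf of the functional graph of $T_d$ is a point with no preimage in $\mathbb{F}_p$. *)

theory Defs
  imports "HOL-Computational_Algebra.Polynomial" "HOL-Computational_Algebra.Primes"
begin

text \<open>Normalized (monic) Chebyshev polynomials of the first kind over the integers: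
  T_0 = 2, T_1 = z, T_(n+2) = z T_(n+1) - T_n, so that T_d(z + 1/z) = z^d + z^-d.\<close>
fun cheb :: "nat \<Rightarrow> int poly" where
  "cheb 0 = [:2:]"
| "cheb (Suc 0) = [:0, 1:]"
| "cheb (Suc (Suc n)) = [:0, 1:] * cheb (Suc n) - cheb n"

definition cheb_map :: "nat \<Rightarrow> int \<Rightarrow> int \<Rightarrow> int" where
  "cheb_map d p x = poly (cheb d) x mod p"

definition cheb_leaves :: "nat \<Rightarrow> int \<Rightarrow> int set" where
  "cheb_leaves d p = {x \<in> {0..p-1}. \<not> (\<exists>y \<in> {0..p-1}. cheb_map d p y = x)}"

end

theory Submission
  imports Defs "HOL-Number_Theory.Number_Theory"
begin

lemma cheb_SS: "poly (cheb (Suc (Suc n))) x = x * poly (cheb (Suc n)) x - poly (cheb n) x"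
  by simp

lemma cheb_zw:
  fixes z w x m :: int
  assumes zw1: "[z + w = x] (mod m)" and zw2: "[z*w = 1] (mod m)"
  shows "[poly (cheb n) x = z^n + w^n] (mod m)"
proof (induction n rule: cheb.induct)
  case 1 then show ?case by simp
next
  case 2 then show ?case using zw1 by (simp add: cong_sym)
next
  case (3 n)
  have "[x * poly (cheb (Suc n)) x - poly (cheb n) x
        = (z+w) * (z^Suc n + w^Suc n) - (z*w) * (z^n+w^n)] (mod m)"
  proof (rule cong_diff)
    show "[x * poly (cheb (Suc n)) x = (z + w) * (z ^ Suc n + w ^ Suc n)] (mod m)"
      by (intro cong_mult 3 cong_sym[OF zw1])
    have "[1 * poly (cheb n) x = (z * w) * (z ^ n + w ^ n)] (mod m)"
      by (intro cong_mult 3 cong_sym[OF zw2])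
    then show "[poly (cheb n) x = (z * w) * (z ^ n + w ^ n)] (mod m)" by simp
  qed
  moreover have "(z+w) * (z^Suc n + w^Suc n) - (z*w) * (z^n+w^n) = z^Suc (Suc n) + w^Suc(Suc n)"
    by (simp add: algebra_simps)
  ultimately show ?case by (simp only: cheb_SS)
qed

lemma cheb_neg: "poly (cheb n) (-x) = (-1)^n * poly (cheb n) (x::int)"
proof (induction n rule: cheb.induct)
  case (3 n)
  show ?case by (simp only: cheb_SS 3) (simp add: algebra_simps)
qed simp_all

lemma poly_cong: "[a = b] (mod m) \<Longrightarrow> [poly f a = poly f (b::int)] (mod m)"
proof (induction f)
  case (pCons c f)
  then show ?case by (simp add: cong_add cong_mult)
qed simp

definition inI :: "int \<Rightarrow> int \<Rightarrow> int poly \<Rightarrow> bool" where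
  "inI p D f \<longleftrightarrow> (\<exists>u v. f = Polynomial.smult p u + [:-D,0,1:] * v)"

definition pc :: "int \<Rightarrow> int \<Rightarrow> int poly \<Rightarrow> int poly \<Rightarrow> bool" where
  "pc p D f g \<longleftrightarrow> inI p D (f - g)"

lemma inI_0: "inI p D 0"
  unfolding inI_def by (rule exI[of _ 0], rule exI[of _ 0]) simp

lemma inI_add: "inI p D f \<Longrightarrow> inI p D g \<Longrightarrow> inI p D (f + g)"
proof -
  assume "inI p D f" "inI p D g"
  then obtain u1 v1 u2 v2 where "f = Polynomial.smult p u1 + [:-D,0,1:] * v1"
    "g = Polynomial.smult p u2 + [:-D,0,1:] * v2" unfolding inI_def by blast
  then have "f + g = Polynomial.smult p (u1 + u2) + [:-D,0,1:] * (v1 + v2)"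
    by (simp only: smult_add_right distrib_left add_ac)
  then show ?thesis unfolding inI_def by blast
qed

lemma inI_mult: "inI p D f \<Longrightarrow> inI p D (g * f)"
proof -
  assume "inI p D f"
  then obtain u1 v1 where "f = Polynomial.smult p u1 + [:-D,0,1:] * v1"
    unfolding inI_def by blast
  then have "g * f = Polynomial.smult p (g * u1) + [:-D,0,1:] * (g * v1)"
    by (simp only: distrib_left mult_smult_right mult.left_commute)
  then show ?thesis unfolding inI_def by blast
qed

lemma inI_uminus: "inI p D f \<Longrightarrow> inI p D (- f)"
  using inI_mult[of p D f "-1"] by simp

lemma inI_diff: "inI p D f \<Longrightarrow> inI p D g \<Longrightarrow> inI p D (f - g)"
  using inI_add[of p D f "-g"] inI_uminus[of p D g] by simp

lemma pc_refl: "pc p D f f" by (simp add: pc_def inI_0)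

lemma pc_sym: "pc p D f g \<Longrightarrow> pc p D g f"
  unfolding pc_def using inI_uminus by fastforce

lemma pc_trans: "pc p D f g \<Longrightarrow> pc p D g h \<Longrightarrow> pc p D f h"
  unfolding pc_def using inI_add by fastforce

lemma pc_add: "pc p D a b \<Longrightarrow> pc p D c e \<Longrightarrow> pc p D (a + c) (b + e)"
  unfolding pc_def using inI_add by (fastforce simp: algebra_simps)

lemma pc_diff: "pc p D a b \<Longrightarrow> pc p D c e \<Longrightarrow> pc p D (a - c) (b - e)"
  unfolding pc_def using inI_diff by (fastforce simp: algebra_simps)

lemma pc_mult: "pc p D a b \<Longrightarrow> pc p D c e \<Longrightarrow> pc p D (a * c) (b * e)"
proof -
  assume "pc p D a b" "pc p D c e"
  then have "inI p D (c * (a - b))" "inI p D (b * (c - e))"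
    unfolding pc_def using inI_mult by blast+
  then have "inI p D (c * (a - b) + b * (c - e))" by (rule inI_add)
  then show ?thesis unfolding pc_def by (simp add: algebra_simps)
qed

lemma pc_pow: "pc p D a b \<Longrightarrow> pc p D (a ^ n) (b ^ n)"
  by (induction n) (simp_all add: pc_refl pc_mult)

lemma pc_const: "[a = b] (mod p) \<Longrightarrow> pc p D [:a:] [:b:]"
proof -
  assume "[a = b] (mod p)"
  then obtain k where "a - b = p * k" by (auto simp: cong_iff_dvd_diff dvd_def)
  then have "[:a:] - [:b:] = Polynomial.smult p [:k:] + [:-D,0,1:] * 0" by simp
  then show ?thesis unfolding pc_def inI_def by blast
qed

lemma pc_X2: "pc p D ([:0,1:]^2) [:D:]"
proof -
  have "[:0,1:]^2 - [:D:] = Polynomial.smult p 0 + [:-D,0,1:] * 1" by (simp add: power2_eq_square)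
  then show ?thesis unfolding pc_def inI_def by blast
qed

lemma inI_const:
  assumes "inI p D [:c:]" shows "p dvd c"
proof -
  define q where "q = [:-D,0,1::int:]"
  obtain u v where uv: "[:c:] = Polynomial.smult p u + q * v" using assms unfolding inI_def q_def by blast
  have q0: "q \<noteq> 0" and dq: "degree q = 2" and lq: "Polynomial.coeff q (degree q) = 1" by (simp_all add: q_def)
  obtain u1 r where ur: "pseudo_divmod u q = (u1, r)" by (cases "pseudo_divmod u q") auto
  have "Polynomial.smult (Polynomial.coeff q (degree q) ^ (Suc (degree u) - degree q)) u = q * u1 + r"
    and rdeg: "r = 0 \<or> degree r < degree q"
    using pseudo_divmod[OF q0 ur] by blast+
  then have u: "u = q * u1 + r" using lq by simp
  have eq: "[:c:] - Polynomial.smult p r = q * (Polynomial.smult p u1 + v)"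
    using uv u by (simp add: algebra_simps smult_add_right)
  have "Polynomial.smult p u1 + v = 0"
  proof (rule ccontr)
    assume ne: "Polynomial.smult p u1 + v \<noteq> 0"
    have "degree (q * (Polynomial.smult p u1 + v)) = 2 + degree (Polynomial.smult p u1 + v)"
      using degree_mult_eq[OF q0 ne] dq by simp
    moreover have "degree ([:c:] - Polynomial.smult p r) < 2"
    proof -
      have "degree ([:c:] - Polynomial.smult p r) \<le> max (degree [:c:]) (degree (Polynomial.smult p r))"
        by (rule degree_diff_le_max)
      moreover have "degree (Polynomial.smult p r) < 2" using rdeg dq
        by (metis degree_0 degree_smult_le le_less_trans zero_less_numeral)
      ultimately show ?thesis by simp
    qed
    ultimately show False using eq by simp
  qed
  with eq have "[:c:] = Polynomial.smult p r" by simp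
  then have "c = p * Polynomial.coeff r 0" by (metis coeff_pCons_0 coeff_smult)
  then show ?thesis by simp
qed

lemma pc_const_cong: "pc p D [:a:] [:b:] \<Longrightarrow> [a = b] (mod p)"
  unfolding pc_def using inI_const[of p D "a - b"] by (simp add: cong_iff_dvd_diff)

lemma fermat_int:
  fixes pn :: nat and a :: int
  assumes "prime pn" "2 < pn"
  shows "[a ^ pn = a] (mod int pn)"
proof -
  define e where "e = (pn - 1) div 2"
  have pe: "pn = Suc (2 * e)" using prime_odd_nat[OF assms] unfolding e_def
    by presburger
  have eu: "[Legendre a (int pn) = a ^ e] (mod int pn)"
    using euler_criterion[OF assms] unfolding e_def by simp
  have apn: "a ^ pn = a * (a ^ e)^2" by (simp only: pe power_Suc mult.commute[of 2 e] power_mult)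
  show ?thesis
  proof (cases "[a = 0] (mod int pn)")
    case True
    then have "[a ^ pn = 0 ^ pn] (mod int pn)" by (rule cong_pow)
    moreover have "(0::int) ^ pn = 0" using assms by simp
    ultimately have "[a ^ pn = 0] (mod int pn)" by simp
    then show ?thesis using cong_trans cong_sym[OF True] by blast
  next
    case False
    then have "Legendre a (int pn) ^ 2 = 1" unfolding Legendre_def by auto
    have "[a * (a ^ e)^2 = a * (Legendre a (int pn))^2] (mod int pn)"
      by (intro cong_mult cong_refl cong_pow cong_sym[OF eu])
    then show ?thesis using apn \<open>Legendre a (int pn) ^ 2 = 1\<close> by simp
  qed
qed

lemma smult_sum_right: "Polynomial.smult c (sum f S) = (\<Sum>i\<in>S. Polynomial.smult c (f i))"
  by (induction S rule: infinite_finite_induct) (simp_all add: smult_add_right)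

lemma frob:
  fixes pn :: nat and f g :: "int poly"
  assumes "prime pn"
  shows "pc (int pn) D ((f + g) ^ pn) (f ^ pn + g ^ pn)"
proof -
  have pn1: "pn \<ge> 1" using assms prime_ge_1_nat by blast
  define t where "t k = of_nat (pn choose k) * f ^ k * g ^ (pn - k)" for k
  have bin: "(f + g) ^ pn = (\<Sum>k\<le>pn. t k)" unfolding t_def by (rule binomial_ring)
  have split: "{..pn} = insert 0 (insert pn {1..<pn})" using pn1 by auto
  have "(\<Sum>k\<le>pn. t k) = t 0 + (t pn + (\<Sum>k\<in>{1..<pn}. t k))"
    unfolding split using pn1 by (subst sum.insert; auto)+
  moreover have "t 0 = g ^ pn" "t pn = f ^ pn" unfolding t_def by simp_all
  moreover have "(\<Sum>k\<in>{1..<pn}. t k) =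
     Polynomial.smult (int pn) (\<Sum>k\<in>{1..<pn}. of_nat ((pn choose k) div pn) * f ^ k * g ^ (pn - k))"
  proof -
    have "(\<Sum>k\<in>{1..<pn}. t k) = (\<Sum>k\<in>{1..<pn}. Polynomial.smult (int pn) (of_nat ((pn choose k) div pn) * f ^ k * g ^ (pn - k)))"
    proof (rule sum.cong[OF refl])
      fix k assume k: "k \<in> {1..<pn}"
      have "pn dvd (pn choose k)" using k assms by (intro dvd_choose_prime) auto
      then have "(pn choose k) = pn * ((pn choose k) div pn)" by simp
      then have "(of_nat (pn choose k) :: int poly) = [:int pn:] * of_nat ((pn choose k) div pn)"
        by (metis of_nat_mult of_nat_poly of_int_of_nat_eq)
      then show "t k = Polynomial.smult (int pn) (of_nat ((pn choose k) div pn) * f ^ k * g ^ (pn - k))"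
        unfolding t_def by (simp add: mult.assoc)
    qed
    also have "\<dots> = Polynomial.smult (int pn) (\<Sum>k\<in>{1..<pn}. of_nat ((pn choose k) div pn) * f ^ k * g ^ (pn - k))"
      by (simp add: smult_sum_right)
    finally show ?thesis .
  qed
  ultimately have "(f + g) ^ pn - (f ^ pn + g ^ pn) = Polynomial.smult (int pn) (\<Sum>k\<in>{1..<pn}. of_nat ((pn choose k) div pn) * f ^ k * g ^ (pn - k)) + [:-D,0,1:] * 0"
    using bin by simp
  then show ?thesis unfolding pc_def inI_def by blast
qed

lemma frob_lin:
  fixes pn :: nat
  assumes pr: "prime pn" and p2: "2 < pn" and nq: "\<not> QuadRes (int pn) D"
  shows "pc (int pn) D ([:a, b:] ^ pn) [:a, -b:]"
proof -
  define X where "X = [:0, 1::int:]"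
  define e where "e = (pn - 1) div 2"
  have pe: "pn = Suc (2 * e)" using prime_odd_nat[OF pr p2] unfolding e_def
    by presburger
  have ab: "[:a, b:] = [:a:] + [:b:] * X" unfolding X_def by simp
  have D0: "\<not> [D = 0] (mod int pn)"
    using nq unfolding QuadRes_def by (metis cong_sym power_zero_numeral)
  have "Legendre D (int pn) = -1" using nq D0 unfolding Legendre_def by simp
  then have eu: "[D ^ e = -1] (mod int pn)"
    using euler_criterion[OF pr p2, of D] unfolding e_def by (simp add: cong_sym)
  have Xp: "X ^ pn = X * (X^2) ^ e" using pe by (simp add: power_mult)
  have "pc (int pn) D (X * (X^2) ^ e) (X * [:D:] ^ e)"
    by (intro pc_mult pc_refl pc_pow) (simp add: X_def pc_X2)
  moreover have "[:D:] ^ e = [:D ^ e:]" by (induction e) simp_all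
  moreover have "pc (int pn) D (X * [:D ^ e:]) (X * [:-1:])"
    by (intro pc_mult pc_refl pc_const eu)
  ultimately have hX: "pc (int pn) D (X ^ pn) (X * [:-1:])" using Xp
    by (metis pc_trans)
  have c1: "[:c:] ^ n = [:c ^ n:]" for c :: int and n :: nat by (induction n) simp_all
  have c2: "([:b:] * X) ^ pn = [:b ^ pn:] * X ^ pn"
    by (simp only: power_mult_distrib c1)
  have "pc (int pn) D ([:a, b:] ^ pn) ([:a:] ^ pn + ([:b:] * X) ^ pn)"
    unfolding ab by (rule frob[OF pr])
  moreover have "pc (int pn) D ([:a:] ^ pn + ([:b:] * X) ^ pn) ([:a:] + [:b:] * (X * [:-1:]))"
    unfolding c1 c2
    by (intro pc_add pc_mult pc_const hX fermat_int[OF pr p2])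
  moreover have "[:a:] + [:b:] * (X * [:-1:]) = [:a, -b:]" unfolding X_def by simp
  ultimately show ?thesis using pc_trans by metis
qed

lemma pc_cheb:
  assumes zw1: "pc p D (z + w) [:x:]" and zw2: "pc p D (z * w) 1"
  shows "pc p D [:poly (cheb n) x:] (z^n + w^n)"
proof (induction n rule: cheb.induct)
  case 1
  have "[:2::int:] = 1 + 1" by (simp add: one_pCons)
  then show ?case by (simp add: pc_refl)
next
  case 2 then show ?case using zw1 by (simp add: pc_sym)
next
  case (3 n)
  have e: "[:poly (cheb (Suc (Suc n))) x:] = [:x:] * [:poly (cheb (Suc n)) x:] - 1 * [:poly (cheb n) x:]"
    by (simp only: cheb_SS) simp
  have "pc p D ([:x:] * [:poly (cheb (Suc n)) x:] - 1 * [:poly (cheb n) x:])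
        ((z+w) * (z^Suc n + w^Suc n) - (z*w) * (z^n+w^n))"
    by (intro pc_diff pc_mult 3 pc_sym[OF zw1] pc_sym[OF zw2])
  moreover have "(z+w) * (z^Suc n + w^Suc n) - (z*w) * (z^n+w^n) = z^Suc (Suc n) + w^Suc(Suc n)"
    by (simp add: algebra_simps)
  ultimately show ?case unfolding e by metis
qed

lemma half_cong:
  fixes pn :: nat
  assumes "prime pn" "2 < pn"
  shows "[2 * ((int pn + 1) div 2) = 1] (mod int pn)"
proof -
  have "odd (int pn)" using prime_odd_nat[OF assms] by simp
  then have "2 * ((int pn + 1) div 2) = int pn + 1" by presburger
  then show ?thesis by (simp add: cong_iff_dvd_diff)
qed

lemma nonsq_case:
  fixes pn :: nat and x :: int
  assumes pr: "prime pn" and p2: "2 < pn" and nq: "\<not> QuadRes (int pn) (x^2 - 4)"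
  shows "[poly (cheb ((pn+1) div 2)) x ^ 2 = 4] (mod int pn)"
proof -
  define p where "p = int pn"
  define D where "D = x^2 - 4"
  define h where "h = (p + 1) div 2"
  define E where "E = (pn + 1) div 2"
  define z where "z = [:h*x, h:]"
  define w where "w = [:h*x, -h:]"
  have h2: "[2 * h = 1] (mod p)" using half_cong[OF pr p2] unfolding h_def p_def .
  have E2: "pn + 1 = 2 * E" using prime_odd_nat[OF pr p2] unfolding E_def by presburger
  have "z + w = [:2*h*x:]" unfolding z_def w_def by simp
  moreover have "[2*h*x = x] (mod p)" using cong_mult[OF h2 cong_refl[of x]] by simp
  ultimately have zw1: "pc p D (z + w) [:x:]" by (simp add: pc_const)
  have zwe: "z * w = [:h*h*x*x:] - [:h*h:] * [:0,1:]^2" unfolding z_def w_def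
    by (simp add: power2_eq_square algebra_simps)
  have "pc p D ([:h*h*x*x:] - [:h*h:] * [:0,1:]^2) ([:h*h*x*x:] - [:h*h:] * [:D:])"
    by (intro pc_diff pc_mult pc_refl pc_X2)
  moreover have "[:h*h*x*x:] - [:h*h:] * [:D:] = [:(2*h)*(2*h):]"
    unfolding D_def by (simp add: algebra_simps power2_eq_square)
  moreover have "[(2*h)*(2*h) = 1] (mod p)" using cong_mult[OF h2 h2] by simp
  ultimately have zw2: "pc p D (z * w) 1" using zwe
    by (metis pc_const pc_trans one_pCons)
  have nq': "\<not> QuadRes (int pn) D" using nq unfolding D_def .
  have zp: "pc p D (z ^ pn) w" unfolding p_def z_def w_def by (rule frob_lin[OF pr p2 nq'])
  have wp: "pc p D (w ^ pn) z" unfolding p_def z_def w_def using frob_lin[OF pr p2 nq', of "h*x" "-h"] by simp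
  have z2: "pc p D (z ^ (2*E)) 1"
  proof -
    have "z ^ (2*E) = z ^ pn * z" using E2[symmetric] by simp
    moreover have "pc p D (z ^ pn * z) (w * z)" by (intro pc_mult zp pc_refl)
    ultimately show ?thesis using zw2 by (metis mult.commute pc_trans)
  qed
  have w2: "pc p D (w ^ (2*E)) 1"
  proof -
    have "w ^ (2*E) = w ^ pn * w" using E2[symmetric] by simp
    moreover have "pc p D (w ^ pn * w) (z * w)" by (intro pc_mult wp pc_refl)
    ultimately show ?thesis using zw2 by (metis pc_trans)
  qed
  have zwE: "pc p D ((z * w) ^ E) 1" using pc_pow[OF zw2, of E] by simp
  have id: "(z^E + w^E)^2 = z ^ (2*E) + 2 * (z*w)^E + w^(2*E)"
    by (simp add: power2_eq_square power_mult_distrib power_mult algebra_simps)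
  have "pc p D ((z^E + w^E)^2) (1 + 2 * 1 + 1)"
    unfolding id by (intro pc_add pc_mult z2 w2 zwE pc_refl)
  then have c4: "pc p D ((z^E + w^E)^2) [:4:]" by (simp add: numeral_poly[symmetric])
  have "pc p D ([:poly (cheb E) x:] ^ 2) ((z^E + w^E)^2)"
    by (intro pc_pow pc_cheb zw1 zw2)
  moreover have "[:poly (cheb E) x:] ^ 2 = [:poly (cheb E) x ^ 2:]"
    by (simp add: power2_eq_square)
  ultimately have "pc p D [:poly (cheb E) x ^ 2:] [:4:]" using c4 by (metis pc_trans)
  then show ?thesis using pc_const_cong unfolding E_def p_def by blast
qed

lemma legendre_pm:
  fixes pn :: nat
  assumes "\<not> [z = 0] (mod int pn)"
  shows "Legendre z (int pn) = 1 \<or> Legendre z (int pn) = -1"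
  using assms unfolding Legendre_def by auto

lemma sq_case:
  fixes pn :: nat and x s :: int
  assumes pr: "prime pn" and p2: "2 < pn" and sq: "[s^2 = x^2 - 4] (mod int pn)"
  shows "[poly (cheb ((pn+1) div 2)) x = x] (mod int pn) \<or> [poly (cheb ((pn+1) div 2)) x = - x] (mod int pn)"
proof -
  define p where "p = int pn"
  define h where "h = (p + 1) div 2"
  define k where "k = (pn - 1) div 2"
  define z where "z = h * (x + s)"
  define w where "w = h * (x - s)"
  have h2: "[2 * h = 1] (mod p)" using half_cong[OF pr p2] unfolding h_def p_def .
  have Ek: "(pn + 1) div 2 = Suc k" using prime_odd_nat[OF pr p2] unfolding k_def by presburger
  have zw1: "[z + w = x] (mod p)"
    using cong_mult[OF h2 cong_refl[of x]] unfolding z_def w_def by (simp add: algebra_simps)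
  have "z * w = h * h * (x^2 - s^2)" unfolding z_def w_def by (simp add: algebra_simps power2_eq_square)
  moreover have "[x^2 - s^2 = 4] (mod p)"
  proof -
    have "[x^2 - s^2 = x^2 - (x^2 - 4)] (mod p)" using sq unfolding p_def by (intro cong_diff cong_refl)
    then show ?thesis by simp
  qed
  ultimately have "[z * w = h * h * 4] (mod p)" by (simp add: cong_mult)
  moreover have "[(2*h)*(2*h) = 1] (mod p)" using cong_mult[OF h2 h2] by simp
  ultimately have zw2: "[z * w = 1] (mod p)" by (simp add: algebra_simps cong_trans)
  have V: "[poly (cheb (Suc k)) x = z ^ Suc k + w ^ Suc k] (mod p)" by (rule cheb_zw[OF zw1 zw2])
  have p1: "\<not> [1 = 0] (mod p)" using p2 unfolding p_def by (simp add: cong_def)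
  have z0: "\<not> [z = 0] (mod int pn)"
  proof
    assume "[z = 0] (mod int pn)"
    then have "[z * w = 0 * w] (mod p)" unfolding p_def by (intro cong_mult cong_refl)
    then show False using zw2 p1 by (metis cong_sym cong_trans mult_zero_left)
  qed
  have w0: "\<not> [w = 0] (mod int pn)"
  proof
    assume "[w = 0] (mod int pn)"
    then have "[z * w = z * 0] (mod p)" unfolding p_def by (intro cong_mult cong_refl)
    then show False using zw2 p1 by (metis cong_sym cong_trans mult_zero_right)
  qed
  define Lz where "Lz = Legendre z p"
  define Lw where "Lw = Legendre w p"
  have ez: "[Lz = z ^ k] (mod p)" using euler_criterion[OF pr p2, of z] unfolding Lz_def p_def k_def by simp
  have ew: "[Lw = w ^ k] (mod p)" using euler_criterion[OF pr p2, of w] unfolding Lw_def p_def k_def by simp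
  have "[Lz * Lw = z ^ k * w ^ k] (mod p)" by (rule cong_mult[OF ez ew])
  moreover have "z ^ k * w ^ k = (z * w) ^ k" by (simp add: power_mult_distrib)
  moreover have "[(z * w) ^ k = 1 ^ k] (mod p)" by (rule cong_pow[OF zw2])
  ultimately have LL: "[Lz * Lw = 1] (mod p)" by (metis cong_trans power_one)
  have Lzpm: "Lz = 1 \<or> Lz = -1" using legendre_pm[OF z0] unfolding Lz_def p_def .
  have Lwpm: "Lw = 1 \<or> Lw = -1" using legendre_pm[OF w0] unfolding Lw_def p_def .
  have m1: "\<not> [-1 = 1] (mod p)"
  proof
    assume "[-1 = 1] (mod p)"
    then have "p dvd 2" by (simp add: cong_iff_dvd_diff dvd_minus_iff)
    then have "p \<le> 2" by (simp add: zdvd_imp_le)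
    then show False using p2 unfolding p_def by simp
  qed
  have LzLw: "Lz = Lw" using Lzpm Lwpm LL m1 by auto
  have "[z ^ Suc k + w ^ Suc k = z * Lz + w * Lw] (mod p)"
    by (simp only: power_Suc) (intro cong_add cong_mult cong_refl cong_sym[OF ez] cong_sym[OF ew])
  moreover have "z * Lz + w * Lw = Lz * (z + w)" using LzLw by (simp add: algebra_simps)
  moreover have "[Lz * (z + w) = Lz * x] (mod p)" by (intro cong_mult cong_refl zw1)
  ultimately have "[poly (cheb (Suc k)) x = Lz * x] (mod p)" using V by (metis cong_trans)
  then show ?thesis using Lzpm unfolding Ek p_def by auto
qed

lemma inv_ex:
  fixes p a :: int
  assumes "prime p" "\<not> p dvd a"
  shows "\<exists>i. p dvd (a * i - 1)"
proof -
  have "coprime a p" using prime_imp_coprime[OF assms] by (simp add: ac_simps)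
  then obtain i where "[a * i = 1] (mod p)" using cong_solve_coprime_int by blast
  then show ?thesis by (auto simp: cong_iff_dvd_diff)
qed

lemma sqrep:
  fixes p m m' :: int
  assumes pr: "prime p" and m: "0 \<le> m" "m \<le> (p - 1) div 2" and m': "0 \<le> m'" "m' \<le> (p - 1) div 2"
    and d: "p dvd (m^2 - m'^2)"
  shows "m = m'"
proof -
  have p0: "p > 0" using pr prime_gt_0_int by blast
  have "m^2 - m'^2 = (m - m') * (m + m')" by (simp add: algebra_simps power2_eq_square)
  then have "p dvd (m - m') \<or> p dvd (m + m')" using d pr prime_dvd_mult_iff by metis
  then show ?thesis
  proof
    assume h: "p dvd (m - m')"
    show ?thesis
    proof (rule ccontr)
      assume "m \<noteq> m'"
      then have "\<bar>p\<bar> \<le> \<bar>m - m'\<bar>" using dvd_imp_le_int[OF _ h] by simp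
      then show False using m m' p0 by linarith
    qed
  next
    assume h: "p dvd (m + m')"
    show ?thesis
    proof (rule ccontr)
      assume "m \<noteq> m'"
      then have "m + m' \<noteq> 0" using m m' by linarith
      then have "\<bar>p\<bar> \<le> \<bar>m + m'\<bar>" using dvd_imp_le_int[OF _ h] by simp
      then show False using m m' p0 by linarith
    qed
  qed
qed

lemma normalize:
  fixes p y :: int
  assumes "odd p" "p > 0"
  shows "\<exists>m. 0 \<le> m \<and> m \<le> (p - 1) div 2 \<and> p dvd (m^2 - y^2)"
proof -
  define r where "r = y mod p"
  have r: "0 \<le> r" "r < p" using assms unfolding r_def by simp_all
  have pr: "p dvd (r - y)" unfolding r_def using mod_eq_dvd_iff[of "y mod p" p y] by simp
  show ?thesis
  proof (cases "r \<le> (p - 1) div 2")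
    case True
    have "r^2 - y^2 = (r - y) * (r + y)" by (simp add: algebra_simps power2_eq_square)
    then have "p dvd (r^2 - y^2)" using pr by simp
    then show ?thesis using True r by blast
  next
    case False
    have "(p - r)^2 - y^2 = (p - r - y) * (p - r + y)" by (simp add: algebra_simps power2_eq_square)
    moreover have "p dvd (p - (r - y))" using dvd_diff[OF dvd_refl pr] .
    then have "p dvd (p - r + y)" by (simp add: algebra_simps)
    ultimately have "p dvd ((p - r)^2 - y^2)" by simp
    moreover have "p - r \<le> (p - 1) div 2" using False assms by presburger
    ultimately show ?thesis using r by (intro exI[of _ "p - r"]) simp
  qed
qed

lemma card_half:
  fixes p :: int
  assumes "p > 0"
  shows "card {0..(p - 1) div 2} = nat ((p + 1) div 2)"
  using assms by simp

lemma S_card: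
  fixes p :: int
  assumes pr: "prime p" and p4: "p > 4"
  shows "card {x \<in> {0..p-1}. QuadRes p (x^2 - 4)} = nat ((p + 1) div 2)"
proof -
  define S where "S = {x \<in> {0..p-1}. QuadRes p (x^2 - 4)}"
  define S2 where "S2 = S - {p - 2}"
  define M where "M = {0..(p - 1) div 2}"
  define M1 where "M1 = M - {1}"
  define Rel where "Rel m x \<longleftrightarrow> p dvd (m^2 * (x + 2) - (x - 2))" for m x
  have odd: "odd p" using prime_odd_int[OF pr] p4 by simp
  have nd4: "\<not> p dvd 4"
  proof
    assume "p dvd 4"
    then have "\<bar>p\<bar> \<le> \<bar>4\<bar>" by (intro dvd_imp_le_int) simp_all
    then show False using p4 by simp
  qed
  have QR: "QuadRes p a \<longleftrightarrow> (\<exists>y. p dvd (y^2 - a))" for a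
    unfolding QuadRes_def by (simp add: cong_iff_dvd_diff)
  have F0: "\<not> p dvd (x + 2)" if "x \<in> S2" for x
  proof
    assume h: "p dvd (x + 2)"
    have x: "0 \<le> x" "x \<le> p - 1" "x \<noteq> p - 2" using that unfolding S2_def S_def by auto
    show False
    proof (cases "x = p - 1")
      case True
      then have "p dvd (p + 1)" using h by simp
      then have "p dvd 1" by (metis add_diff_cancel_left' dvd_diff dvd_refl)
      then show False using zdvd_imp_le[of p 1] p4 by simp
    next
      case False
      then have "0 < x + 2" "x + 2 < p" using x by auto
      then show False using h zdvd_imp_le by fastforce
    qed
  qed
  have F3: "x = x'" if "m \<in> M" "x \<in> {0..p-1}" "x' \<in> {0..p-1}" "Rel m x" "Rel m x'" for m x x'
  proof -
    have "(m^2 - 1) * (x - x') = (m^2 * (x + 2) - (x - 2)) - (m^2 * (x' + 2) - (x' - 2))"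
      by (simp add: algebra_simps)
    then have d1: "p dvd ((m^2 - 1) * (x - x'))" using that unfolding Rel_def by (metis dvd_diff)
    have "\<not> p dvd (m^2 - 1)"
    proof
      assume "p dvd (m^2 - 1)"
      moreover have "4 = (m^2 * (x + 2) - (x - 2)) - (m^2 - 1) * (x + 2)" by (simp add: algebra_simps)
      ultimately have "p dvd 4" using that unfolding Rel_def by (metis dvd_diff dvd_mult2)
      then show False using nd4 by simp
    qed
    then have "p dvd (x - x')" using d1 pr prime_dvd_mult_iff by metis
    show ?thesis
    proof (rule ccontr)
      assume "x \<noteq> x'"
      then have "\<bar>p\<bar> \<le> \<bar>x - x'\<bar>" using dvd_imp_le_int[OF _ \<open>p dvd (x - x')\<close>] by simp
      then show False using that by auto
    qed
  qed
  have F4: "m = m'" if "m \<in> M" "m' \<in> M" "x \<in> S2" "Rel m x" "Rel m' x" for m m' x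
  proof -
    have "(m^2 - m'^2) * (x + 2) = (m^2 * (x + 2) - (x - 2)) - (m'^2 * (x + 2) - (x - 2))"
      by (simp add: algebra_simps)
    then have "p dvd ((m^2 - m'^2) * (x + 2))" using that unfolding Rel_def by (metis dvd_diff)
    then have "p dvd (m^2 - m'^2)" using F0[OF that(3)] pr prime_dvd_mult_iff by metis
    then show ?thesis using sqrep[OF pr] that unfolding M_def by auto
  qed
  have F1: "\<exists>m \<in> M1. Rel m x" if xS: "x \<in> S2" for x
  proof -
    have "QuadRes p (x^2 - 4)" using that unfolding S2_def S_def by auto
    then obtain s where s: "p dvd (s^2 - (x^2 - 4))" using QR by blast
    obtain i where i: "p dvd ((x + 2) * i - 1)" using inv_ex[OF pr F0[OF xS]] by blast
    define m0 where "m0 = s * i"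
    have "m0^2 * (x + 2) - (x - 2) = (s^2 - (x^2 - 4)) * (i^2 * (x + 2)) + ((x + 2) * i - 1) * ((x - 2) * ((x + 2) * i + 1))"
      unfolding m0_def by (simp add: algebra_simps power2_eq_square)
    then have r0: "p dvd (m0^2 * (x + 2) - (x - 2))" using s i by (metis dvd_add dvd_mult2)
    obtain m where m: "0 \<le> m" "m \<le> (p - 1) div 2" "p dvd (m^2 - m0^2)"
      using normalize[of p m0] odd p4 by auto
    have "m^2 * (x + 2) - (x - 2) = (m^2 - m0^2) * (x + 2) + (m0^2 * (x + 2) - (x - 2))"
      by (simp add: algebra_simps)
    then have R: "Rel m x" unfolding Rel_def using m(3) r0 by (metis dvd_add dvd_mult2)
    have "m \<noteq> 1"
    proof
      assume "m = 1"
      then have "p dvd 4" using R unfolding Rel_def by simp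
      then show False using nd4 by simp
    qed
    then show ?thesis using m R unfolding M1_def M_def by auto
  qed
  have F2: "\<exists>x \<in> S2. Rel m x" if "m \<in> M1" for m
  proof -
    have m: "0 \<le> m" "m \<le> (p - 1) div 2" "m \<noteq> 1" using that unfolding M1_def M_def by auto
    have "\<not> p dvd (m^2 - 1^2)"
    proof
      assume "p dvd (m^2 - 1^2)"
      then have "m = 1" using sqrep[OF pr m(1,2), of 1] p4 by simp
      then show False using m by simp
    qed
    then obtain j where j: "p dvd ((m^2 - 1) * j - 1)" using inv_ex[OF pr] by fastforce
    define x0 where "x0 = -2 * (m^2 + 1) * j"
    define x where "x = x0 mod p"
    have px: "p dvd (x - x0)" unfolding x_def using mod_eq_dvd_iff[of "x0 mod p" p x0] by simp
    have "m^2 * (x + 2) - (x - 2) = (m^2 - 1) * (x - x0) - 2 * (m^2 + 1) * ((m^2 - 1) * j - 1)"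
      unfolding x0_def by (simp add: algebra_simps)
    then have R: "Rel m x" unfolding Rel_def using px j by (metis dvd_diff dvd_mult dvd_mult2)
    have xr: "x \<in> {0..p-1}" unfolding x_def using p4 by auto
    have "(m * (x + 2))^2 - (x^2 - 4) = (x + 2) * (m^2 * (x + 2) - (x - 2))"
      by (simp add: algebra_simps power2_eq_square)
    then have "QuadRes p (x^2 - 4)" unfolding QR using R unfolding Rel_def by (metis dvd_mult)
    moreover have "x \<noteq> p - 2"
    proof
      assume "x = p - 2"
      then have "4 = (m^2 * (x + 2) - (x - 2)) - p * (m^2 - 1)" by (simp add: algebra_simps)
      then have "p dvd 4" using R unfolding Rel_def by (metis dvd_diff dvd_triv_left)
      then show False using nd4 by simp
    qed
    ultimately show ?thesis using R xr unfolding S2_def S_def by auto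
  qed
  define f where "f x = (SOME m. m \<in> M1 \<and> Rel m x)" for x
  define g where "g m = (SOME x. x \<in> S2 \<and> Rel m x)" for m
  have fx: "f x \<in> M1 \<and> Rel (f x) x" if "x \<in> S2" for x
    unfolding f_def using someI_ex[OF F1[OF that, unfolded Bex_def]] .
  have gm: "g m \<in> S2 \<and> Rel m (g m)" if "m \<in> M1" for m
    unfolding g_def using someI_ex[OF F2[OF that, unfolded Bex_def]] .
  have S2sub: "S2 \<subseteq> {0..p-1}" unfolding S2_def S_def by auto
  have finS2: "finite S2" using S2sub finite_subset by blast
  have "card S2 = card M1"
  proof (rule card_bij_eq[of f S2 M1 g])
    show "inj_on f S2"
    proof (rule inj_onI)
      fix x x' assume "x \<in> S2" "x' \<in> S2" "f x = f x'"
      then have a: "f x \<in> M" "Rel (f x) x" "Rel (f x) x'" "x \<in> {0..p-1}" "x' \<in> {0..p-1}"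
        using fx[of x] fx[of x'] S2sub unfolding M1_def by auto
      show "x = x'" by (rule F3[OF a(1,4,5,2,3)])
    qed
    show "inj_on g M1"
    proof (rule inj_onI)
      fix m m' assume "m \<in> M1" "m' \<in> M1" "g m = g m'"
      then show "m = m'" using F4[of m m' "g m"] gm[of m] gm[of m'] unfolding M1_def by auto
    qed
    show "f ` S2 \<subseteq> M1" using fx by blast
    show "g ` M1 \<subseteq> S2" using gm by blast
    show "finite S2" by (rule finS2)
    show "finite M1" unfolding M1_def M_def by simp
  qed
  moreover have "card M1 = nat ((p + 1) div 2) - 1"
    unfolding M1_def M_def using p4 by (subst card_Diff_singleton) auto
  moreover have "S = insert (p - 2) S2"
  proof -
    have "p - 2 \<in> S" unfolding S_def QR using p4
      by (auto intro!: exI[of _ 0]) (simp add: algebra_simps power2_eq_square)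
    then show ?thesis unfolding S2_def by auto
  qed
  moreover have "finite S2" "p - 2 \<notin> S2" using finS2 unfolding S2_def by auto
  ultimately have "card S = nat ((p + 1) div 2) - 1 + 1" by simp
  then show ?thesis unfolding S_def using p4 by simp
qed

lemma cheb2: "poly (cheb 2) y = y^2 - 2"
  by (simp add: numeral_2_eq_2 power2_eq_square)

theorem mainTheorem7:
  fixes d :: nat and p :: int
  assumes "prime d" and "prime p" and "odd p"
    and "d = 2 \<or> 2 * int d = p + 1"
  shows "card (cheb_leaves d p) = nat ((p - 1) div 2)"
proof -
  have p2: "p > 2" using assms(2,3) prime_ge_2_int[OF assms(2)] by (cases "p = 2") auto
  define pn where "pn = nat p"
  have ppn: "p = int pn" unfolding pn_def using p2 by simp
  have prn: "prime pn" unfolding pn_def using assms(2) by simp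
  have pn2: "2 < pn" using p2 ppn by simp
  define Im where "Im = cheb_map d p ` {0..p-1}"
  have L: "cheb_leaves d p = {0..p-1} - Im" unfolding cheb_leaves_def Im_def by auto
  have Imsub: "Im \<subseteq> {0..p-1}" unfolding Im_def cheb_map_def using p2 by auto
  have cardIm: "card Im = nat ((p + 1) div 2)"
  proof (cases "d = 2")
    case True
    define M where "M = {0..(p - 1) div 2}"
    have "Im = (\<lambda>m. (m^2 - 2) mod p) ` M"
    proof
      show "Im \<subseteq> (\<lambda>m. (m^2 - 2) mod p) ` M"
      proof
        fix v assume "v \<in> Im"
        then obtain y where y: "v = (y^2 - 2) mod p" unfolding Im_def cheb_map_def True cheb2 by auto
        obtain m where m: "0 \<le> m" "m \<le> (p - 1) div 2" "p dvd (m^2 - y^2)"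
          using normalize[of p y] assms(3) p2 by auto
        have "(m^2 - 2) - (y^2 - 2) = m^2 - y^2" by simp
        then have "(m^2 - 2) mod p = (y^2 - 2) mod p" using m(3) by (metis mod_eq_dvd_iff)
        then show "v \<in> (\<lambda>m. (m^2 - 2) mod p) ` M" unfolding y
          by (intro image_eqI[where x=m]) (use m in \<open>auto simp: M_def\<close>)
      qed
      show "(\<lambda>m. (m^2 - 2) mod p) ` M \<subseteq> Im"
      proof
        fix v assume "v \<in> (\<lambda>m. (m^2 - 2) mod p) ` M"
        then obtain m where m: "m \<in> M" "v = (m^2 - 2) mod p" by auto
        then have "m \<in> {0..p-1}" unfolding M_def using p2 by auto
        then show "v \<in> Im" unfolding Im_def cheb_map_def True cheb2 using m by auto
      qed
    qed
    moreover have "inj_on (\<lambda>m. (m^2 - 2) mod p) M"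
    proof (rule inj_onI)
      fix m m' assume mm: "m \<in> M" "m' \<in> M" "(m^2 - 2) mod p = (m'^2 - 2) mod p"
      then have "p dvd ((m^2 - 2) - (m'^2 - 2))" by (metis mod_eq_dvd_iff)
      then have "p dvd (m^2 - m'^2)" by simp
      then show "m = m'" using sqrep[OF assms(2)] mm unfolding M_def by auto
    qed
    ultimately have "card Im = card M" by (simp add: card_image)
    then show ?thesis unfolding M_def using card_half[of p] p2 by simp
  next
    case False
    then have d2: "2 * int d = p + 1" using assms(4) by simp
    have dodd: "odd d" using prime_odd_nat[OF assms(1)] prime_ge_2_nat[OF assms(1)] False by simp
    have p4: "p > 4" using d2 dodd False prime_ge_2_nat[OF assms(1)] by presburger
    have dpn: "d = (pn + 1) div 2" using d2 ppn by simp
    define S where "S = {x \<in> {0..p-1}. QuadRes p (x^2 - 4)}"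
    have QR: "QuadRes p a \<longleftrightarrow> (\<exists>y. [y^2 = a] (mod p))" for a
      unfolding QuadRes_def by (simp add: cong_sym_eq)
    have "Im = S"
    proof
      show "Im \<subseteq> S"
      proof
        fix v assume "v \<in> Im"
        then obtain y where y: "y \<in> {0..p-1}" "v = poly (cheb d) y mod p"
          unfolding Im_def cheb_map_def by auto
        have vr: "v \<in> {0..p-1}" using y p2 by auto
        have vV: "[v = poly (cheb d) y] (mod p)" using y by simp
        have "QuadRes p (v^2 - 4)"
        proof (cases "QuadRes p (y^2 - 4)")
          case True
          then obtain s where s: "[s^2 = y^2 - 4] (mod p)" using QR by blast
          have "[poly (cheb d) y = y] (mod p) \<or> [poly (cheb d) y = - y] (mod p)"
            using sq_case[OF prn pn2, of s y] s unfolding dpn ppn by simp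
          then have "[v = y] (mod p) \<or> [v = - y] (mod p)" using vV cong_trans by blast
          then have "[v^2 = y^2] (mod p)" by (metis cong_pow power2_minus)
          then have "[s^2 = v^2 - 4] (mod p)" using s by (metis cong_diff cong_refl cong_sym cong_trans)
          then show ?thesis using QR by blast
        next
          case False
          have "[poly (cheb d) y ^ 2 = 4] (mod p)"
            using nonsq_case[OF prn pn2, of y] False unfolding dpn ppn by simp
          then have "[v^2 = 4] (mod p)" using cong_pow[OF vV, of 2] cong_trans by blast
          then have "[0^2 = v^2 - 4] (mod p)"
            by (simp add: cong_iff_dvd_diff) (metis dvd_minus_iff minus_diff_eq)
          then show ?thesis using QR by blast
        qed
        then show "v \<in> S" unfolding S_def using vr by simp
      qed
      show "S \<subseteq> Im"
      proof
        fix x assume "x \<in> S"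
        then have xr: "x \<in> {0..p-1}" and q: "QuadRes p (x^2 - 4)" unfolding S_def by auto
        then obtain s where s: "[s^2 = x^2 - 4] (mod p)" using QR by blast
        have "[poly (cheb d) x = x] (mod p) \<or> [poly (cheb d) x = - x] (mod p)"
          using sq_case[OF prn pn2, of s x] s unfolding dpn ppn by simp
        then show "x \<in> Im"
        proof
          assume "[poly (cheb d) x = x] (mod p)"
          then have "cheb_map d p x = x" unfolding cheb_map_def using xr by (simp add: cong_def)
          then show ?thesis unfolding Im_def using xr by force
        next
          assume h: "[poly (cheb d) x = - x] (mod p)"
          define y where "y = (- x) mod p"
          have yr: "y \<in> {0..p-1}" unfolding y_def using p2 by auto
          have "[poly (cheb d) y = poly (cheb d) (- x)] (mod p)" unfolding y_def
            by (rule poly_cong) simp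
          moreover have "poly (cheb d) (- x) = - poly (cheb d) x" using cheb_neg[of d x] dodd by simp
          moreover have "[- poly (cheb d) x = x] (mod p)" using cong_minus_minus_iff h by (metis minus_minus)
          ultimately have "[poly (cheb d) y = x] (mod p)" using cong_trans by metis
          then have "cheb_map d p y = x" unfolding cheb_map_def using xr by (simp add: cong_def)
          then show ?thesis unfolding Im_def using yr by force
        qed
      qed
    qed
    then show ?thesis using S_card[OF assms(2) p4] unfolding S_def by simp
  qed
  have "card (cheb_leaves d p) = card {0..p-1} - card Im"
    unfolding L by (rule card_Diff_subset) (use Imsub finite_subset in auto)
  also have "\<dots> = nat p - nat ((p + 1) div 2)" using cardIm by simp
  also have "\<dots> = nat ((p - 1) div 2)"
  proof -
    obtain k where k: "p = 2*k+1" using assms(3) oddE by blast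
    then have a: "(p+1) div 2 = k+1" "(p-1) div 2 = k" by simp_all
    have "nat p - nat (k + 1) = nat (p - (k + 1))" using k p2 by (intro nat_diff_distrib[symmetric]) auto
    then show ?thesis unfolding a using k by simp
  qed
  finally show ?thesis .
qed

end
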